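(* The set of CDFs of univariate Gaussian mixtures $x\mapsto\sum_{j=1}^n p_j\Phi\!\left(\frac{x-\mu_j}{\sigma_j}\right)$, with $n\in\mathbb{N}^+$, $p_j\ge 0$, $\sum_j p_j=1$, $\mu_j\in\mathbb{R}$, $\sigma_j>0$, is dense in the metric space $(L^2_{\mathrm{CDF}},l_2)$.
   Context: $\Phi(x)=\int_{-\infty}^x \frac{1}{\sqrt{2\pi}}e^{-y^2/2}\,dy$ is the standard normal CDF. A CDF is a function $F:\mathbb{R}\to[0,1]$ that is right-continuous, non-decreasing, with limits $0$ at $-\infty$ and $1$ at $+\infty$. $H$ is the Heaviside function ($H(x)=0$ for $x<0$, $H(x)=1$ for $x\ge0$). $L^2_{\mathrm{CDF}}=\{F\text{ a CDF}: |F-H|\in L^2(\mathbb{R})\}$ and $l_2(F_1,F_2)=\left(\int_{\mathbb{R}}|F_1-F_2|^2dx\right)^{1/2}$. *)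

theory Defs
  imports "HOL-Analysis.Analysis"
begin

definition Phi :: "real \<Rightarrow> real" where
  "Phi x = (LBINT y:{..x}. (1 / sqrt (2 * pi)) * exp (- y\<^sup>2 / 2))"

definition is_CDF :: "(real \<Rightarrow> real) \<Rightarrow> bool" where
  "is_CDF F \<longleftrightarrow> (\<forall>x. 0 \<le> F x \<and> F x \<le> 1) \<and> mono F \<and>
     (\<forall>a. continuous (at_right a) F) \<and>
     (F \<longlongrightarrow> 0) at_bot \<and> (F \<longlongrightarrow> 1) at_top"

definition Heaviside :: "real \<Rightarrow> real" where
  "Heaviside x = (if x < 0 then 0 else 1)"

definition L2_CDF :: "(real \<Rightarrow> real) set" where
  "L2_CDF = {F. is_CDF F \<and> (\<lambda>x. F x - Heaviside x) \<in> borel_measurable lborel \<and>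
                 integrable lborel (\<lambda>x. (F x - Heaviside x)\<^sup>2)}"

definition l2 :: "(real \<Rightarrow> real) \<Rightarrow> (real \<Rightarrow> real) \<Rightarrow> real" where
  "l2 F1 F2 = sqrt (LINT x|lborel. (F1 x - F2 x)\<^sup>2)"

definition gauss_mix_CDFs :: "(real \<Rightarrow> real) set" where
  "gauss_mix_CDFs = {G. \<exists>n::nat. \<exists>p \<mu> \<sigma> :: nat \<Rightarrow> real. n \<ge> 1 \<and>
      (\<forall>j<n. p j \<ge> 0 \<and> \<sigma> j > 0) \<and> (\<Sum>j<n. p j) = 1 \<and>
      G = (\<lambda>x. \<Sum>j<n. p j * Phi ((x - \<mu> j) / \<sigma> j))}"

end

theory Submission imports Defs "HOL-Probability.Probability" begin
definition NM where "NM = density lborel std_normal_density"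
lemma rd: "real_distribution NM"
  unfolding NM_def real_distribution_def real_distribution_axioms_def
  by (simp add: prob_space_normal_density)
lemma Phi_eq: "Phi x = (LINT y|lborel. indicator {..x} y * std_normal_density y)"
  unfolding Phi_def set_lebesgue_integral_def std_normal_density_def by simp
lemma int_ind: "A \<in> sets borel \<Longrightarrow> integrable lborel (\<lambda>y. indicator A y * std_normal_density y)"
  using integrable_mult_indicator[of A lborel std_normal_density] by simp
lemma Phi_cdf: "Phi x = cdf NM x"
proof -
  have "cdf NM x = measure NM {..x}" by (simp add: cdf_def)
  also have "\<dots> = enn2real (\<integral>\<^sup>+ y. ennreal (indicator {..x} y * std_normal_density y) \<partial>lborel)"
    unfolding NM_def measure_def 
    by (auto simp: emeasure_density intro!: arg_cong[where f=enn2real] nn_integral_cong split: split_indicator)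
  also have "\<dots> = (LINT y|lborel. indicator {..x} y * std_normal_density y)"
    by (subst nn_integral_eq_integral) (auto intro!: int_ind)
  finally show ?thesis unfolding Phi_eq by simp
qed
interpretation NMd: real_distribution NM by (rule rd)

lemma Phi_nonneg: "0 \<le> Phi x" by (simp add: Phi_cdf NMd.cdf_nonneg)
lemma Phi_le1: "Phi x \<le> 1" by (simp add: Phi_cdf NMd.cdf_bounded_prob)
lemma Phi_mono: "x \<le> y \<Longrightarrow> Phi x \<le> Phi y" by (simp add: Phi_cdf NMd.cdf_nondecreasing)
lemma Phi_top: "(Phi \<longlongrightarrow> 1) at_top"
  using NMd.cdf_lim_at_top_prob by (simp add: Phi_cdf[abs_def])
lemma Phi_bot: "(Phi \<longlongrightarrow> 0) at_bot"
  using NMd.cdf_lim_at_bot by (simp add: Phi_cdf[abs_def])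
lemma Phi_cont: "isCont Phi x"
proof -
  have "measure NM {x} = 0"
    unfolding NM_def measure_def
    by (subst emeasure_density) auto
  then show ?thesis using NMd.isCont_cdf by (simp add: Phi_cdf[abs_def])
qed
lemma Phi_meas[measurable]: "Phi \<in> borel_measurable borel"
  by (intro borel_measurable_continuous_onI continuous_at_imp_continuous_on ballI Phi_cont)

lemma mom2: "(LINT x|lborel. std_normal_density x * x^2) = 1"
  using integral_std_normal_moment_even[of 1] by simp
lemma intmom2: "integrable lborel (\<lambda>x. std_normal_density x * x^2)"
  using integrable_std_normal_moment[of 2] by simp

lemma Phi_tail_neg: assumes "y < 0" shows "Phi y \<le> 1 / y^2"
proof -
  have "Phi y \<le> (LINT x|lborel. std_normal_density x * x^2 / y^2)"
    unfolding Phi_eq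
  proof (rule integral_mono)
    show "integrable lborel (\<lambda>x. std_normal_density x * x^2 / y^2)" using intmom2 by simp
    show "integrable lborel (\<lambda>x. indicator {..y} x * std_normal_density x)" 
      by (auto intro!: int_ind)
    fix x
    show "indicator {..y} x * std_normal_density x \<le> std_normal_density x * x^2 / y^2"
    proof (cases "x \<le> y")
      case True
      then have "(-y)^2 \<le> (-x)^2" using assms by (intro power_mono) auto
      then have "y^2 \<le> x^2" by simp
      then have "1 \<le> x^2/y^2" using assms by simp
      then have "std_normal_density x * 1 \<le> std_normal_density x * (x^2 / y^2)"
        by (intro mult_left_mono) auto
      then show ?thesis using True by simp
    qed (simp)
  qed
  also have "\<dots> = 1 / y^2" using mom2 by simp
  finally show ?thesis .
qed

lemma Phi_tail_pos: assumes "y > 0" shows "1 - Phi y \<le> 1 / y^2"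
proof -
  have "1 - Phi y = (LINT x|lborel. std_normal_density x) - (LINT x|lborel. indicator {..y} x * std_normal_density x)"
    unfolding Phi_eq by simp
  also have "\<dots> = (LINT x|lborel. indicator {y<..} x * std_normal_density x)"
    by (subst Bochner_Integration.integral_diff[symmetric])
       (auto intro!: int_ind Bochner_Integration.integral_cong split: split_indicator)
  also have "\<dots> \<le> (LINT x|lborel. std_normal_density x * x^2 / y^2)"
  proof (rule integral_mono)
    show "integrable lborel (\<lambda>x. std_normal_density x * x^2 / y^2)" using intmom2 by simp
    show "integrable lborel (\<lambda>x. indicator {y<..} x * std_normal_density x)" 
      by (auto intro!: int_ind)
    fix x
    show "indicator {y<..} x * std_normal_density x \<le> std_normal_density x * x^2 / y^2"
    proof (cases "y < x")
      case True
      then have "y^2 \<le> x^2" using assms by (simp add: power_mono)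
      then have "1 \<le> x^2/y^2" using assms by simp
      then have "std_normal_density x * 1 \<le> std_normal_density x * (x^2 / y^2)"
        by (intro mult_left_mono) auto
      then show ?thesis using True by simp
    qed (simp)
  qed
  also have "\<dots> = 1 / y^2" using mom2 by simp
  finally show ?thesis .
qed

lemma Heaviside_meas[measurable]: "Heaviside \<in> borel_measurable borel"
  unfolding Heaviside_def by measurable

lemma PhiH_bound: "(Phi y - Heaviside y)^2 \<le> 2 * inverse (1 + y^2)"
proof -
  have a: "\<bar>Phi y - Heaviside y\<bar> \<le> 1" using Phi_nonneg[of y] Phi_le1[of y]
    by (auto simp: Heaviside_def)
  have b: "y \<noteq> 0 \<Longrightarrow> \<bar>Phi y - Heaviside y\<bar> \<le> 1 / y^2"
    using Phi_tail_neg[of y] Phi_tail_pos[of y] Phi_nonneg[of y] Phi_le1[of y]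
    by (cases "y < 0") (auto simp: Heaviside_def)
  have sq: "(Phi y - Heaviside y)^2 \<le> \<bar>Phi y - Heaviside y\<bar>"
  proof -
    have "\<bar>Phi y - Heaviside y\<bar> * \<bar>Phi y - Heaviside y\<bar> \<le> \<bar>Phi y - Heaviside y\<bar> * 1"
      using a by (intro mult_left_mono) auto
    then show ?thesis by (simp add: power2_eq_square)
  qed
  show ?thesis
  proof (cases "y^2 \<le> 1")
    case True
    have p: "0 < 1 + y^2" by (simp add: add_pos_nonneg)
    have "1 * (1 + y^2) \<le> 2" using True by simp
    then have "1 \<le> 2 / (1 + y^2)" using p by (simp only: le_divide_eq) simp
    then have "1 \<le> 2 * inverse (1 + y^2)" by (simp add: divide_inverse)
    then show ?thesis using sq a by linarith
  next
    case False
    then have "y \<noteq> 0" by auto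
    have p: "0 < 1 + y^2" by (simp add: add_pos_nonneg)
    have q: "0 < y^2" using \<open>y \<noteq> 0\<close> by simp
    have "1 * (1 + y^2) \<le> 2 * y^2" using False by simp
    then have "1 / y^2 \<le> 2 / (1 + y^2)" using p q by (simp add: frac_le_eq divide_simps)
    then have "1 / y^2 \<le> 2 * inverse (1 + y^2)" by (simp add: divide_inverse)
    then show ?thesis using sq b[OF \<open>y \<noteq> 0\<close>] by linarith
  qed
qed

lemma int_inv: "integrable lborel (\<lambda>x::real. inverse (1 + x^2))"
  using integrable_inverse_1_plus_square by (simp add: set_integrable_def)

lemma PhiH_int: "integrable lborel (\<lambda>y. (Phi y - Heaviside y)^2)"
  by (rule Bochner_Integration.integrable_bound[OF integrable_mult_right[OF int_inv, of 2]])
     (auto intro!: AE_I2 simp: PhiH_bound)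

lemma jensen_sq:
  fixes p a :: "nat \<Rightarrow> real"
  assumes "\<And>j. j < n \<Longrightarrow> p j \<ge> 0" "(\<Sum>j<n. p j) = 1"
  shows "(\<Sum>j<n. p j * a j)^2 \<le> (\<Sum>j<n. p j * (a j)^2)"
proof -
  define m where "m = (\<Sum>j<n. p j * a j)"
  have "0 \<le> (\<Sum>j<n. p j * (a j - m)^2)" by (intro sum_nonneg) (simp add: assms)
  also have "\<dots> = (\<Sum>j<n. p j * (a j)^2 - 2 * m * (p j * a j) + m^2 * p j)"
    by (intro sum.cong) (auto simp: power2_eq_square algebra_simps)
  also have "\<dots> = (\<Sum>j<n. p j * (a j)^2) - 2 * m * m + m^2 * 1"
    unfolding sum.distrib sum_subtractf sum_distrib_left[symmetric] m_def[symmetric] assms(2) ..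
  finally show ?thesis unfolding m_def[symmetric] by (simp add: power2_eq_square)
qed

definition C0 where "C0 = (LINT y|lborel. (Phi y - Heaviside y)^2)"

lemma C0_nonneg: "0 \<le> C0" unfolding C0_def by simp

lemma H_scale: "0 < s \<Longrightarrow> Heaviside (s * x) = Heaviside x"
  unfolding Heaviside_def by (simp add: mult_less_0_iff)

lemma shift_scale:
  fixes \<sigma> \<mu> :: real assumes "\<sigma> > 0"
  shows "integrable lborel (\<lambda>x. (Heaviside (x - \<mu>) - Phi ((x - \<mu>) / \<sigma>))^2)"
    and "(LINT x|lborel. (Heaviside (x - \<mu>) - Phi ((x - \<mu>) / \<sigma>))^2) = \<sigma> * C0"
proof -
  define f where "f = (\<lambda>x. (Heaviside (x - \<mu>) - Phi ((x - \<mu>) / \<sigma>))^2)"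
  have e: "(\<lambda>x. f (\<mu> + \<sigma> * x)) = (\<lambda>y. (Phi y - Heaviside y)^2)"
    using assms by (auto simp: f_def H_scale power2_commute)
  have "integrable lborel f"
    using lborel_integrable_real_affine_iff[of \<sigma> f \<mu>] assms PhiH_int by (simp add: e)
  then show "integrable lborel (\<lambda>x. (Heaviside (x - \<mu>) - Phi ((x - \<mu>) / \<sigma>))^2)" by (simp add: f_def)
  have "integral\<^sup>L lborel f = \<bar>\<sigma>\<bar> *\<^sub>R (\<integral>x. f (\<mu> + \<sigma> * x) \<partial>lborel)"
    using lborel_integral_real_affine[of \<sigma> f \<mu>] assms by simp
  also have "\<dots> = \<sigma> * C0" using assms by (simp add: e C0_def)
  finally show "(LINT x|lborel. (Heaviside (x - \<mu>) - Phi ((x - \<mu>) / \<sigma>))^2) = \<sigma> * C0"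
    by (simp add: f_def)
qed

lemma H_shift_int: "integrable lborel (\<lambda>x. (Heaviside (x - \<mu>) - Heaviside x)^2)"
proof (rule Bochner_Integration.integrable_bound[of _ "indicator {min \<mu> 0 .. max \<mu> 0}"])
  show "integrable lborel (indicator {min \<mu> 0 .. max \<mu> 0} :: real \<Rightarrow> real)" by simp
  show "(\<lambda>x. (Heaviside (x - \<mu>) - Heaviside x)^2) \<in> borel_measurable lborel" by measurable
  show "AE x in lborel. norm ((Heaviside (x - \<mu>) - Heaviside x)^2) \<le> norm (indicator {min \<mu> 0 .. max \<mu> 0} x :: real)"
    by (rule AE_I2) (auto simp: Heaviside_def indicator_def)
qed

lemma sq_sum_le: "(a + b :: real)^2 \<le> 2 * a^2 + 2 * b^2"
  by (smt (verit) power2_diff power2_sum zero_le_power2)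

lemma sq_tri: "(c - e :: real)^2 \<le> 2 * (d - c)^2 + 2 * (d - e)^2"
  using sq_sum_le[of "c - d" "d - e"] by (simp add: power2_commute)

lemma mix_CDF:
  fixes p \<mu> \<sigma> :: "nat \<Rightarrow> real"
  assumes n: "n \<ge> 1" and ps: "\<forall>j<n. p j \<ge> 0 \<and> \<sigma> j > 0" and s1: "(\<Sum>j<n. p j) = 1"
  defines "G \<equiv> (\<lambda>x. \<Sum>j<n. p j * Phi ((x - \<mu> j) / \<sigma> j))"
  shows "G \<in> L2_CDF"
proof -
  have cont: "isCont G x" for x
    unfolding G_def using ps
    by (intro continuous_intros isCont_o2[OF _ Phi_cont]) auto
  have G01: "0 \<le> G x \<and> G x \<le> 1" for x
  proof
    show "0 \<le> G x" unfolding G_def using ps by (auto intro!: sum_nonneg simp: Phi_nonneg)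
    have "G x \<le> (\<Sum>j<n. p j * 1)" unfolding G_def using ps
      by (intro sum_mono mult_left_mono) (auto simp: Phi_le1)
    then show "G x \<le> 1" using s1 by simp
  qed
  have mono: "mono G"
  proof (rule monoI)
    fix x y :: real assume "x \<le> y"
    then show "G x \<le> G y" unfolding G_def using ps
      by (intro sum_mono mult_left_mono Phi_mono divide_right_mono) auto
  qed
  have lim_top: "(G \<longlongrightarrow> 1) at_top"
  proof -
    have "((\<lambda>x. \<Sum>j<n. p j * Phi ((x - \<mu> j) / \<sigma> j)) \<longlongrightarrow> (\<Sum>j<n. p j * 1)) at_top"
    proof (intro tendsto_sum tendsto_mult tendsto_const)
      fix j assume "j \<in> {..<n}"
      then have sp: "\<sigma> j > 0" using ps by auto
      have "filterlim (\<lambda>x. (x - \<mu> j) / \<sigma> j) at_top at_top"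
        unfolding filterlim_at_top
      proof
        fix Z :: real
        show "\<forall>\<^sub>F x in at_top. Z \<le> (x - \<mu> j) / \<sigma> j"
          unfolding eventually_at_top_linorder
          using sp by (intro exI[of _ "Z * \<sigma> j + \<mu> j"]) (auto simp: le_divide_eq)
      qed
      then show "((\<lambda>x. Phi ((x - \<mu> j) / \<sigma> j)) \<longlongrightarrow> 1) at_top"
        by (rule filterlim_compose[OF Phi_top])
    qed
    then show ?thesis using s1 by (simp add: G_def)
  qed
  have lim_bot: "(G \<longlongrightarrow> 0) at_bot"
  proof -
    have "((\<lambda>x. \<Sum>j<n. p j * Phi ((x - \<mu> j) / \<sigma> j)) \<longlongrightarrow> (\<Sum>j<n. p j * 0)) at_bot"
    proof (intro tendsto_sum tendsto_mult tendsto_const)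
      fix j assume "j \<in> {..<n}"
      then have sp: "\<sigma> j > 0" using ps by auto
      have "filterlim (\<lambda>x. (x - \<mu> j) / \<sigma> j) at_bot at_bot"
        unfolding filterlim_at_bot
      proof
        fix Z :: real
        show "\<forall>\<^sub>F x in at_bot. (x - \<mu> j) / \<sigma> j \<le> Z"
          unfolding eventually_at_bot_linorder
          using sp by (intro exI[of _ "Z * \<sigma> j + \<mu> j"]) (auto simp: divide_le_eq)
      qed
      then show "((\<lambda>x. Phi ((x - \<mu> j) / \<sigma> j)) \<longlongrightarrow> 0) at_bot"
        by (rule filterlim_compose[OF Phi_bot])
    qed
    then show ?thesis by (simp add: G_def)
  qed
  have cdf: "is_CDF G"
    unfolding is_CDF_def using G01 mono lim_top lim_bot cont
    by (auto intro: continuous_within_subset[of _ UNIV] simp: continuous_at_imp_continuous_within)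
  have Gm[measurable]: "G \<in> borel_measurable borel"
    by (rule borel_measurable_continuous_onI continuous_at_imp_continuous_on)+ (auto intro: cont)
  have meas: "(\<lambda>x. G x - Heaviside x) \<in> borel_measurable lborel" by measurable
  have eq: "G x - Heaviside x = (\<Sum>j<n. p j * (Phi ((x - \<mu> j) / \<sigma> j) - Heaviside x))" for x
    unfolding G_def using s1 by (simp add: right_diff_distrib sum_subtractf sum_distrib_right[symmetric])
  have bnd: "(G x - Heaviside x)^2 \<le> (\<Sum>j<n. p j * (2 * (Heaviside (x - \<mu> j) - Phi ((x - \<mu> j) / \<sigma> j))^2
               + 2 * (Heaviside (x - \<mu> j) - Heaviside x)^2))" for x
  proof -
    have "(G x - Heaviside x)^2 \<le> (\<Sum>j<n. p j * (Phi ((x - \<mu> j) / \<sigma> j) - Heaviside x)^2)"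
      unfolding eq using ps s1 by (intro jensen_sq) auto
    also have "\<dots> \<le> (\<Sum>j<n. p j * (2 * (Heaviside (x - \<mu> j) - Phi ((x - \<mu> j) / \<sigma> j))^2
               + 2 * (Heaviside (x - \<mu> j) - Heaviside x)^2))"
      using ps by (intro sum_mono mult_left_mono sq_tri) auto
    finally show ?thesis .
  qed
  have int: "integrable lborel (\<lambda>x. (G x - Heaviside x)^2)"
  proof (rule Bochner_Integration.integrable_bound[OF _ _ AE_I2])
    show "integrable lborel (\<lambda>x. \<Sum>j<n. p j * (2 * (Heaviside (x - \<mu> j) - Phi ((x - \<mu> j) / \<sigma> j))^2
               + 2 * (Heaviside (x - \<mu> j) - Heaviside x)^2))"
      using ps by (intro Bochner_Integration.integrable_sum integrable_mult_right Bochner_Integration.integrable_add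
          shift_scale(1) H_shift_int) auto
    show "(\<lambda>x. (G x - Heaviside x)^2) \<in> borel_measurable lborel" by measurable
    fix x
    have "0 \<le> (\<Sum>j<n. p j * (2 * (Heaviside (x - \<mu> j) - Phi ((x - \<mu> j) / \<sigma> j))^2
               + 2 * (Heaviside (x - \<mu> j) - Heaviside x)^2))"
      using ps by (intro sum_nonneg mult_nonneg_nonneg add_nonneg_nonneg) auto
    then show "norm ((G x - Heaviside x)^2) \<le> norm (\<Sum>j<n. p j * (2 * (Heaviside (x - \<mu> j) - Phi ((x - \<mu> j) / \<sigma> j))^2
               + 2 * (Heaviside (x - \<mu> j) - Heaviside x)^2))"
      using bnd[of x] by simp
  qed
  show ?thesis unfolding L2_CDF_def using cdf meas int by auto
qed

lemma part1: "gauss_mix_CDFs \<subseteq> L2_CDF"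
  unfolding gauss_mix_CDFs_def using mix_CDF by blast

lemma mix_close:
  fixes p \<mu> :: "nat \<Rightarrow> real" and \<sigma> :: real
  assumes ps: "\<And>j. j < n \<Longrightarrow> p j \<ge> 0" and s1: "(\<Sum>j<n. p j) = 1" and sp: "\<sigma> > 0"
  shows "(LINT x|lborel. ((\<Sum>j<n. p j * Heaviside (x - \<mu> j)) - (\<Sum>j<n. p j * Phi ((x - \<mu> j) / \<sigma>)))^2) \<le> \<sigma> * C0"
    and "integrable lborel (\<lambda>x. ((\<Sum>j<n. p j * Heaviside (x - \<mu> j)) - (\<Sum>j<n. p j * Phi ((x - \<mu> j) / \<sigma>)))^2)"
proof -
  let ?B = "\<lambda>x. \<Sum>j<n. p j * (Heaviside (x - \<mu> j) - Phi ((x - \<mu> j) / \<sigma>))^2"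
  have pt: "((\<Sum>j<n. p j * Heaviside (x - \<mu> j)) - (\<Sum>j<n. p j * Phi ((x - \<mu> j) / \<sigma>)))^2 \<le> ?B x" for x
  proof -
    have "(\<Sum>j<n. p j * Heaviside (x - \<mu> j)) - (\<Sum>j<n. p j * Phi ((x - \<mu> j) / \<sigma>))
        = (\<Sum>j<n. p j * (Heaviside (x - \<mu> j) - Phi ((x - \<mu> j) / \<sigma>)))"
      by (simp add: sum_subtractf right_diff_distrib)
    then show ?thesis using jensen_sq[OF ps s1] by simp
  qed
  have Bi: "integrable lborel ?B"
    using sp by (intro Bochner_Integration.integrable_sum integrable_mult_right shift_scale(1))
  have B0: "0 \<le> ?B x" for x using ps by (intro sum_nonneg) auto
  have "(LINT x|lborel. ((\<Sum>j<n. p j * Heaviside (x - \<mu> j)) - (\<Sum>j<n. p j * Phi ((x - \<mu> j) / \<sigma>)))^2)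
      \<le> integral\<^sup>L lborel ?B"
    by (rule integral_mono'[OF Bi pt B0])
  also have "\<dots> = (\<Sum>j<n. p j * (\<sigma> * C0))"
    using sp by (subst Bochner_Integration.integral_sum)
      (auto intro!: integrable_mult_right shift_scale(1) simp: shift_scale(2))
  also have "\<dots> = \<sigma> * C0" using s1 by (simp add: sum_distrib_right[symmetric])
  finally show "(LINT x|lborel. ((\<Sum>j<n. p j * Heaviside (x - \<mu> j)) - (\<Sum>j<n. p j * Phi ((x - \<mu> j) / \<sigma>)))^2) \<le> \<sigma> * C0" .
  show "integrable lborel (\<lambda>x. ((\<Sum>j<n. p j * Heaviside (x - \<mu> j)) - (\<Sum>j<n. p j * Phi ((x - \<mu> j) / \<sigma>)))^2)"
    by (rule Bochner_Integration.integrable_bound[OF Bi _ AE_I2]) (use pt B0 in \<open>auto\<close>)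
qed

lemma tail_small:
  fixes f :: "real \<Rightarrow> real"
  assumes fi: "integrable lborel f" and d: "d > 0"
  shows "\<exists>n::nat. n \<ge> 1 \<and> (LINT x|lborel. f x * indicator {x. real n \<le> \<bar>x\<bar>} x) < d"
proof -
  have fm[measurable]: "f \<in> borel_measurable borel" using fi by auto
  define s where "s = (\<lambda>(i::nat) x. f x * indicator {x. real i \<le> \<bar>x\<bar>} x)"
  have m1: "(\<lambda>x. 0::real) \<in> borel_measurable lborel" by simp
  have m2: "s i \<in> borel_measurable lborel" for i unfolding s_def by measurable
  have m3: "integrable lborel (\<lambda>x. \<bar>f x\<bar>)" using fi by simp
  have m4: "AE x in lborel. (\<lambda>i. s i x) \<longlonglongrightarrow> 0"
  proof (rule AE_I2)
    fix x :: real
    obtain N :: nat where "\<bar>x\<bar> < real N" using reals_Archimedean2 by blast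
    then have "\<forall>i\<ge>N. s i x = 0"
      by (auto simp: indicator_def s_def)
    then show "(\<lambda>i. s i x) \<longlonglongrightarrow> 0"
      by (intro tendsto_eventually eventually_sequentiallyI) auto
  qed
  have m5: "AE x in lborel. norm (s i x) \<le> \<bar>f x\<bar>" for i
    by (rule AE_I2) (auto simp: indicator_def s_def)
  have lim: "(\<lambda>i. integral\<^sup>L lborel (s i)) \<longlonglongrightarrow> integral\<^sup>L lborel (\<lambda>x. 0::real)"
    using Bochner_Integration.integral_dominated_convergence[OF m1 m2 m3 m4 m5] by simp
  then have "(\<lambda>i. LINT x|lborel. f x * indicator {x. real i \<le> \<bar>x\<bar>} x) \<longlonglongrightarrow> 0" by (simp add: s_def)
  then have "eventually (\<lambda>i. (LINT x|lborel. f x * indicator {x. real i \<le> \<bar>x\<bar>} x) < d) sequentially"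
    using d by (rule order_tendstoD)
  then obtain N where N: "\<And>i. i \<ge> N \<Longrightarrow> (LINT x|lborel. f x * indicator {x. real i \<le> \<bar>x\<bar>} x) < d"
    by (auto simp: eventually_sequentially)
  have "(LINT x|lborel. f x * indicator {x. real (Suc N) \<le> \<bar>x\<bar>} x) < d" by (rule N) simp
  moreover have "Suc N \<ge> 1" by simp
  ultimately show ?thesis by blast
qed

lemma sum_restrict_lt: "(m::nat) \<le> n \<Longrightarrow> (\<Sum>j<n. if j < m then f j else (0::real)) = (\<Sum>j<m. f j)"
proof -
  assume "m \<le> n"
  then have e: "{..<n} \<inter> {..<m} = {..<m}" by auto
  have "(\<Sum>j<n. if j < m then f j else 0) = (\<Sum>j\<in>{..<n} \<inter> {..<m}. f j)"
    by (subst sum.inter_restrict) auto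
  then show ?thesis by (simp add: e)
qed

lemma sq_le_of_bounds: "0 \<le> (a::real) \<Longrightarrow> a \<le> d \<Longrightarrow> d \<le> 1 \<Longrightarrow> a^2 \<le> d"
proof -
  assume "0 \<le> a" "a \<le> d" "d \<le> 1"
  then have "a * a \<le> a * 1" by (intro mult_left_mono) auto
  then show ?thesis using \<open>a \<le> d\<close> by (simp add: power2_eq_square)
qed

lemma step_approx:
  fixes F :: "real \<Rightarrow> real" and R h :: real and N :: nat and t c p :: "nat \<Rightarrow> real"
  assumes cdf: "is_CDF F" and R: "R > 0" and N: "N \<ge> 1"
    and h_def: "h = 2 * R / real N" and t_def: "t = (\<lambda>k. - R + real k * h)"
    and c_def: "c = (\<lambda>k. if k = 0 then 0 else if k = Suc N then 1 else F (t (k - 1)))"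
    and p_def: "p = (\<lambda>k. c (Suc k) - c k)"
  shows "\<And>k. k < Suc N \<Longrightarrow> p k \<ge> 0" and "(\<Sum>k<Suc N. p k) = 1"
    and "\<And>x. (F x - (\<Sum>k<Suc N. p k * Heaviside (x - t k)))^2 \<le>
          (F x - Heaviside x)^2 * indicator {x. R \<le> \<bar>x\<bar>} x +
          (\<Sum>k<N. (F (t (Suc k)) - F (t k)) * indicator {t k..<t (Suc k)} x)"
    and "integrable lborel (\<lambda>x. \<Sum>k<N. (F (t (Suc k)) - F (t k)) * indicator {t k..<t (Suc k)} x)"
    and "(LINT x|lborel. (\<Sum>k<N. (F (t (Suc k)) - F (t k)) * indicator {t k..<t (Suc k)} x)) \<le> h"
proof -
  have F01: "0 \<le> F x" "F x \<le> 1" for x using cdf unfolding is_CDF_def by auto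
  have Fm: "mono F" using cdf unfolding is_CDF_def by auto
  have hp: "h > 0" using R N by (simp add: h_def)
  have tle: "i \<le> j \<Longrightarrow> t i \<le> t j" for i j using hp by (simp add: t_def mult_right_mono)
  have tlt: "i < j \<Longrightarrow> t i < t j" for i j using hp by (simp add: t_def mult_strict_right_mono)
  have t0: "t 0 = - R" by (simp add: t_def)
  have tN: "t N = R" using N by (simp add: t_def h_def)
  have tS: "t (Suc k) = t k + h" for k by (simp add: t_def algebra_simps)
  have Ft: "F (t i) \<le> F (t j)" if "i \<le> j" for i j using Fm tle[OF that] by (simp add: mono_def)
  show pnn: "p k \<ge> 0" if "k < Suc N" for k
  proof (cases "k = 0")
    case True then show ?thesis using N F01 by (simp add: p_def c_def)
  next
    case False
    show ?thesis
    proof (cases "k = N")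
      case True then show ?thesis using False F01 by (simp add: p_def c_def)
    next
      case False2: False
      then show ?thesis using False that Ft[of "k - 1" k] by (simp add: p_def c_def)
    qed
  qed
  show ps: "(\<Sum>k<Suc N. p k) = 1"
    unfolding p_def by (subst sum_lessThan_telescope) (simp add: c_def)
  have dnn: "0 \<le> F (t (Suc k)) - F (t k)" for k using Ft[of k "Suc k"] by simp
  show "(F x - (\<Sum>k<Suc N. p k * Heaviside (x - t k)))^2 \<le>
          (F x - Heaviside x)^2 * indicator {x. R \<le> \<bar>x\<bar>} x +
          (\<Sum>k<N. (F (t (Suc k)) - F (t k)) * indicator {t k..<t (Suc k)} x)" for x
  proof -
    have gnn: "0 \<le> (\<Sum>k<N. (F (t (Suc k)) - F (t k)) * indicator {t k..<t (Suc k)} x)"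
      using dnn by (intro sum_nonneg) auto
    consider "x < - R" | "R \<le> x" | "- R \<le> x" "x < R" by linarith
    then show ?thesis
    proof cases
      case 1
      have "Heaviside (x - t k) = 0" for k using 1 tle[of 0 k] t0 by (simp add: Heaviside_def)
      moreover have "Heaviside x = 0" using 1 R by (simp add: Heaviside_def)
      moreover have "R \<le> \<bar>x\<bar>" using 1 R by simp
      ultimately show ?thesis using gnn by simp
    next
      case 2
      have "Heaviside (x - t k) = 1" if "k < Suc N" for k
        using tle[of k N] tN that 2 by (simp add: Heaviside_def)
      then have "(\<Sum>k<Suc N. p k * Heaviside (x - t k)) = (\<Sum>k<Suc N. p k)" by simp
      moreover have "Heaviside x = 1" using 2 R by (simp add: Heaviside_def)
      moreover have "R \<le> \<bar>x\<bar>" using 2 R by simp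
      ultimately show ?thesis using gnn ps by simp
    next
      case 3
      define q where "q = (x + R) / h"
      define k0 where "k0 = nat \<lfloor>q\<rfloor>"
      have q0: "0 \<le> q" using 3 hp by (simp add: q_def)
      have qN: "q < real N" using 3 hp R N by (simp add: q_def h_def field_simps)
      have k0q: "real k0 \<le> q" "q < real k0 + 1" using q0 by (simp_all add: k0_def)
      have k0N: "k0 < N" using k0q qN by linarith
      have xq: "x = - R + q * h" using hp by (simp add: q_def)
      have tk0: "t k0 \<le> x" using k0q(1) hp xq by (simp add: t_def mult_right_mono)
      have tk1: "x < t (Suc k0)" using k0q(2) hp xq by (simp add: t_def mult_strict_right_mono)
      have Hj: "Heaviside (x - t j) = (if j < Suc k0 then 1 else 0)" for j
      proof (cases "j < Suc k0")
        case True then have "t j \<le> x" using tle[of j k0] tk0 by simp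
        then show ?thesis using True by (simp add: Heaviside_def)
      next
        case False then have "t (Suc k0) \<le> t j" by (intro tle) simp
        then show ?thesis using False tk1 by (simp add: Heaviside_def)
      qed
      have "(\<Sum>k<Suc N. p k * Heaviside (x - t k)) = (\<Sum>k<Suc N. if k < Suc k0 then p k else 0)"
        by (intro sum.cong) (auto simp: Hj)
      also have "\<dots> = (\<Sum>k<Suc k0. p k)" using k0N by (intro sum_restrict_lt) simp
      also have "\<dots> = F (t k0)" unfolding p_def
        using k0N by (subst sum_lessThan_telescope) (simp add: c_def)
      finally have S: "(\<Sum>k<Suc N. p k * Heaviside (x - t k)) = F (t k0)" .
      have a0: "0 \<le> F x - F (t k0)" using Fm tk0 by (simp add: mono_def)
      have a1: "F x - F (t k0) \<le> F (t (Suc k0)) - F (t k0)" using Fm tk1 by (simp add: mono_def)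
      have d1: "F (t (Suc k0)) - F (t k0) \<le> 1" using F01[of "t (Suc k0)"] F01[of "t k0"] by simp
      have "(F x - F (t k0))^2 \<le> F (t (Suc k0)) - F (t k0)" by (rule sq_le_of_bounds[OF a0 a1 d1])
      also have "\<dots> = (F (t (Suc k0)) - F (t k0)) * indicator {t k0..<t (Suc k0)} x"
        using tk0 tk1 by simp
      also have "\<dots> \<le> (\<Sum>k<N. (F (t (Suc k)) - F (t k)) * indicator {t k..<t (Suc k)} x)"
        using k0N dnn
        by (intro member_le_sum[where f="\<lambda>k. (F (t (Suc k)) - F (t k)) * indicator {t k..<t (Suc k)} x"])
           auto
      finally have fin: "(F x - F (t k0))^2 \<le> (\<Sum>k<N. (F (t (Suc k)) - F (t k)) * indicator {t k..<t (Suc k)} x)" .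
      have nn: "0 \<le> (F x - Heaviside x)^2 * indicator {x. R \<le> \<bar>x\<bar>} x" by simp
      show ?thesis unfolding S using fin nn by linarith
    qed
  qed
  have ii: "integrable lborel (\<lambda>x. (F (t (Suc k)) - F (t k)) * indicator {t k..<t (Suc k)} x)" for k
    using hp by (intro integrable_mult_right integrable_real_indicator) (auto simp: tS)
  show "integrable lborel (\<lambda>x. \<Sum>k<N. (F (t (Suc k)) - F (t k)) * indicator {t k..<t (Suc k)} x)"
    using ii by (intro Bochner_Integration.integrable_sum) auto
  have "(LINT x|lborel. (\<Sum>k<N. (F (t (Suc k)) - F (t k)) * indicator {t k..<t (Suc k)} x))
      = (\<Sum>k<N. (F (t (Suc k)) - F (t k)) * h)"
    using ii hp by (subst Bochner_Integration.integral_sum) (auto simp: tS)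
  also have "\<dots> = (F (t N) - F (t 0)) * h"
    by (subst sum_distrib_right[symmetric]) (subst sum_lessThan_telescope[where f="\<lambda>k. F (t k)"], simp)
  also have "\<dots> \<le> 1 * h" using F01[of "t N"] F01[of "t 0"] hp by (intro mult_right_mono) auto
  finally show "(LINT x|lborel. (\<Sum>k<N. (F (t (Suc k)) - F (t k)) * indicator {t k..<t (Suc k)} x)) \<le> h"
    by simp
qed

lemma part2:
  assumes FL: "F \<in> L2_CDF" and e: "\<epsilon> > 0"
  shows "\<exists>G\<in>gauss_mix_CDFs. l2 F G < \<epsilon>"
proof -
  have cdf: "is_CDF F" and int1: "integrable lborel (\<lambda>x. (F x - Heaviside x)^2)"
    using FL unfolding L2_CDF_def by auto
  have Fm[measurable]: "F \<in> borel_measurable borel"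
    using cdf unfolding is_CDF_def by (intro borel_measurable_mono) auto
  define \<delta> where "\<delta> = \<epsilon>^2 / 8"
  have dp: "\<delta> > 0" using e by (simp add: \<delta>_def)
  obtain n0 :: nat where n0: "n0 \<ge> 1"
    and tail: "(LINT x|lborel. (F x - Heaviside x)^2 * indicator {x. real n0 \<le> \<bar>x\<bar>} x) < \<delta>"
    using tail_small[OF int1 dp] by blast
  define R where "R = real n0"
  have Rp: "R > 0" using n0 by (simp add: R_def)
  obtain N :: nat where NN: "16 * R / \<epsilon>^2 < real N" using reals_Archimedean2 by blast
  have "0 < 16 * R / \<epsilon>^2" using Rp e by simp
  then have N1: "N \<ge> 1" using NN by (cases N) auto
  define h where "h = 2 * R / real N"
  have hsmall: "h < \<epsilon>^2 / 8"
  proof -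
    have "16 * R < \<epsilon>^2 * real N" using NN e by (simp add: divide_less_eq mult.commute)
    then show ?thesis using N1 by (simp add: h_def divide_less_eq field_simps)
  qed
  define t where "t = (\<lambda>k::nat. - R + real k * h)"
  define c where "c = (\<lambda>k. if k = 0 then 0 else if k = Suc N then 1 else F (t (k - 1)))"
  define p where "p = (\<lambda>k. c (Suc k) - c k)"
  note SA = step_approx[OF cdf Rp N1 h_def t_def c_def p_def]
  define g where "g = (\<lambda>x. \<Sum>k<N. (F (t (Suc k)) - F (t k)) * indicator {t k..<t (Suc k)} x)"
  define \<sigma> where "\<sigma> = \<epsilon>^2 / (8 * (C0 + 1))"
  have sp: "\<sigma> > 0" using e C0_nonneg by (simp add: \<sigma>_def)
  have sC: "\<sigma> * C0 \<le> \<epsilon>^2 / 8"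
  proof -
    have "\<sigma> * C0 = (\<epsilon>^2 / 8) * (C0 / (C0 + 1))" by (simp add: \<sigma>_def field_simps)
    also have "\<dots> \<le> (\<epsilon>^2 / 8) * 1" using C0_nonneg by (intro mult_left_mono) auto
    finally show ?thesis by simp
  qed
  define S where "S = (\<lambda>x. \<Sum>k<Suc N. p k * Heaviside (x - t k))"
  define G where "G = (\<lambda>x. \<Sum>k<Suc N. p k * Phi ((x - t k) / \<sigma>))"
  have Gmix: "G \<in> gauss_mix_CDFs"
    unfolding gauss_mix_CDFs_def G_def
    using SA(1,2) sp by (intro CollectI exI[of _ "Suc N"] exI[of _ p] exI[of _ t] exI[of _ "\<lambda>_. \<sigma>"]) auto
  have Sm[measurable]: "S \<in> borel_measurable borel" unfolding S_def by measurable
  have Gm[measurable]: "G \<in> borel_measurable borel" unfolding G_def by measurable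
  define B1 where "B1 = (\<lambda>x. (F x - Heaviside x)^2 * indicator {x. R \<le> \<bar>x\<bar>} x + g x)"
  have B1i: "integrable lborel B1"
    unfolding B1_def g_def
    by (intro Bochner_Integration.integrable_add SA(4) integrable_real_mult_indicator int1) measurable
  have B1nn: "0 \<le> B1 x" for x
    using SA(3)[of x] unfolding B1_def g_def by (meson order_trans zero_le_power2)
  have FSle: "(F x - S x)^2 \<le> B1 x" for x using SA(3)[of x] by (simp add: B1_def g_def S_def)
  have FSi: "integrable lborel (\<lambda>x. (F x - S x)^2)"
    by (rule Bochner_Integration.integrable_bound[OF B1i _ AE_I2]) (use FSle B1nn in \<open>auto\<close>)
  have "(LINT x|lborel. (F x - S x)^2) \<le> integral\<^sup>L lborel B1"
    by (rule integral_mono'[OF B1i FSle B1nn])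
  also have "\<dots> = (LINT x|lborel. (F x - Heaviside x)^2 * indicator {x. R \<le> \<bar>x\<bar>} x) + integral\<^sup>L lborel g"
    unfolding B1_def g_def
    by (intro Bochner_Integration.integral_add SA(4) integrable_real_mult_indicator int1) measurable
  also have "\<dots> < \<delta> + h" using tail SA(5) unfolding R_def g_def by linarith
  finally have FS: "(LINT x|lborel. (F x - S x)^2) < \<delta> + h" .
  have SG: "(LINT x|lborel. (S x - G x)^2) \<le> \<sigma> * C0"
    and SGi: "integrable lborel (\<lambda>x. (S x - G x)^2)"
    using mix_close[of "Suc N" p \<sigma> t] SA(1,2) sp unfolding S_def G_def by auto
  have B2i: "integrable lborel (\<lambda>x. 2 * (F x - S x)^2 + 2 * (S x - G x)^2)"
    using FSi SGi by auto
  have "(LINT x|lborel. (F x - G x)^2) \<le> (LINT x|lborel. 2 * (F x - S x)^2 + 2 * (S x - G x)^2)"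
  proof (rule integral_mono'[OF B2i])
    fix x
    show "(F x - G x)^2 \<le> 2 * (F x - S x)^2 + 2 * (S x - G x)^2"
      using sq_sum_le[of "F x - S x" "S x - G x"] by simp
  qed simp
  also have "\<dots> = 2 * (LINT x|lborel. (F x - S x)^2) + 2 * (LINT x|lborel. (S x - G x)^2)"
    using FSi SGi by simp
  also have "\<dots> < \<epsilon>^2"
  proof -
    have "0 < \<epsilon>^2" using e by simp
    then show ?thesis using FS SG sC hsmall unfolding \<delta>_def by linarith
  qed
  finally have lt: "(LINT x|lborel. (F x - G x)^2) < \<epsilon>^2" .
  have "l2 F G < \<epsilon>"
    unfolding l2_def using lt e real_sqrt_less_mono[OF lt] by simp
  then show ?thesis using Gmix by blast
qed

theorem lemma2:
  shows "gauss_mix_CDFs \<subseteq> L2_CDF \<and>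
    (\<forall>F\<in>L2_CDF. \<forall>\<epsilon>>0. \<exists>G\<in>gauss_mix_CDFs. l2 F G < \<epsilon>)"
  using part1 part2 by blast
end
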